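(* $W_{\max}(20,9)\in\{4,5,\dots,34\}$.
   Context: A weighing matrix of order $n$ and weight $k$ is an $n\times n$ matrix $W$ with entries in $\{1,-1,0\}$ such that $WW^T=kI_n$. Two weighing matrices $W_1,W_2$ of order $n$ and weight $k$ are unbiased if $\frac{1}{\sqrt{k}}W_1W_2^T$ is also a weighing matrix of order $n$ and weight $k$; a set is mutually unbiased if any two distinct members are unbiased. $W_{\max}(n,9)$ denotes the maximum size of a set of mutually unbiased weighing matrices of order $n$ and weight $9$. *)

theory Defs
  imports "Jordan_Normal_Form.Matrix"
begin

text \<open>Matrices are taken over the reals so that
  the scaled product (1/sqrt k) W1 W2^T can be formed directly.\<close>
definition weighing_matrix :: "nat \<Rightarrow> nat \<Rightarrow> real mat \<Rightarrow> bool" where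
  "weighing_matrix n k W \<longleftrightarrow>
     W \<in> carrier_mat n n \<and>
     (\<forall>i<n. \<forall>j<n. W $$ (i, j) \<in> {1, -1, 0}) \<and>
     W * transpose_mat W = of_nat k \<cdot>\<^sub>m 1\<^sub>m n"

definition unbiased_wm :: "nat \<Rightarrow> nat \<Rightarrow> real mat \<Rightarrow> real mat \<Rightarrow> bool" where
  "unbiased_wm n k W1 W2 \<longleftrightarrow>
     weighing_matrix n k W1 \<and> weighing_matrix n k W2 \<and>
     weighing_matrix n k ((1 / sqrt (real k)) \<cdot>\<^sub>m (W1 * transpose_mat W2))"

definition mutually_unbiased_wm :: "nat \<Rightarrow> nat \<Rightarrow> real mat set \<Rightarrow> bool" where
  "mutually_unbiased_wm n k S \<longleftrightarrow>
     (\<forall>W\<in>S. weighing_matrix n k W) \<and>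
     (\<forall>W1\<in>S. \<forall>W2\<in>S. W1 \<noteq> W2 \<longrightarrow> unbiased_wm n k W1 W2)"

text \<open>Maximum size of a set of mutually unbiased weighing matrices of order n, weight k.
  (Such sets are finite since there are finitely many weighing matrices of a given order.)\<close>
definition W_max :: "nat \<Rightarrow> nat \<Rightarrow> nat" where
  "W_max n k = Max {card S | S. finite S \<and> mutually_unbiased_wm n k S}"

end

theory Submission imports Defs "Jordan_Normal_Form.Determinant" begin

lemma sdm: "x * (if P then 1 else 0) = (if P then x else (0::real))"
  by simp

lemma gD: "(\<Sum>a<(n::nat). \<Sum>b<n. \<Sum>c<n. \<Sum>e<n. F a b c e * (if a=b \<and> b=c \<and> c=e then 1 else 0)) = (\<Sum>a<n. F a a a a::real)"
proof -
  have 1: "\<And>a b c. (\<Sum>e<n. F a b c e * (if a=b \<and> b=c \<and> c=e then 1 else 0)) = (if a=b \<and> b=c \<and> c < n then F a a a a else 0)"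
    subgoal for a b c by (cases "a=b"; cases "b=c"; simp add: sdm)
    done
  have 2: "\<And>a b. (\<Sum>c<n. (if a=b \<and> b=c \<and> c < n then F a a a a else 0)) = (if a=b \<and> b < n then F a a a a else 0)"
    subgoal for a b by (cases "a=b"; simp)
    done
  have 3: "\<And>a. (\<Sum>b<n. (if a=b \<and> b < n then F a a a a else 0)) = (if a < n then F a a a a else 0)"
    by simp
  show ?thesis by (simp only: 1 2 3) simp
qed

lemma gA: "(\<Sum>a<(n::nat). \<Sum>b<n. \<Sum>c<n. \<Sum>e<n. F a b c e * (if a=b \<and> c=e then 1 else 0)) = (\<Sum>a<n. \<Sum>c<n. F a a c c::real)"
proof -
  have 1: "\<And>a b c. (\<Sum>e<n. F a b c e * (if a=b \<and> c=e then 1 else 0)) = (if a=b \<and> c < n then F a a c c else 0)"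
    subgoal for a b c by (cases "a=b"; simp add: sdm)
    done
  have 2: "\<And>a b. (\<Sum>c<n. (if a=b \<and> c < n then F a a c c else 0)) = (if a=b then (\<Sum>c<n. F a a c c) else 0)"
    subgoal for a b by (cases "a=b"; simp)
    done
  show ?thesis by (simp only: 1 2) simp
qed

lemma gB: "(\<Sum>a<(n::nat). \<Sum>b<n. \<Sum>c<n. \<Sum>e<n. F a b c e * (if a=c \<and> b=e then 1 else 0)) = (\<Sum>a<n. \<Sum>b<n. F a b a b::real)"
proof -
  have 1: "\<And>a b c. (\<Sum>e<n. F a b c e * (if a=c \<and> b=e then 1 else 0)) = (if a=c \<and> b < n then F a b a b else 0)"
    subgoal for a b c by (cases "a=c"; simp add: sdm)
    done
  have 2: "\<And>a b. b < n \<Longrightarrow> (\<Sum>c<n. (if a=c \<and> b < n then F a b a b else 0)) = (if a < n then F a b a b else 0)"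
    by simp
  show ?thesis by (simp only: 1 2 cong: sum.cong) simp
qed

lemma gC: "(\<Sum>a<(n::nat). \<Sum>b<n. \<Sum>c<n. \<Sum>e<n. F a b c e * (if a=e \<and> b=c then 1 else 0)) = (\<Sum>a<n. \<Sum>b<n. F a b b a::real)"
proof -
  have 1: "\<And>a b c. (\<Sum>e<n. F a b c e * (if a=e \<and> b=c then 1 else 0)) = (if b=c \<and> a < n then F a b b a else 0)"
    subgoal for a b c by (cases "b=c"; simp add: sdm)
    done
  have 2: "\<And>a b. a < n \<Longrightarrow> (\<Sum>c<n. (if b=c \<and> a < n then F a b b a else 0)) = (if b < n then F a b b a else 0)"
    by simp
  show ?thesis by (simp only: 1 2 cong: sum.cong) simp
qed

definition Qf :: "nat \<Rightarrow> nat \<Rightarrow> nat \<Rightarrow> nat \<Rightarrow> real" where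
 "Qf a b c e = -5 * (if a=b \<and> b=c \<and> c=e then 1 else 0) + 8 * (if a=b \<and> c=e then 1 else 0) + 8 * (if a=c \<and> b=e then 1 else 0) + 8 * (if a=e \<and> b=c then 1 else 0)"

lemma sumQ: "(\<Sum>a<(n::nat). \<Sum>b<n. \<Sum>c<n. \<Sum>e<n. F a b c e * Qf a b c e) =
   -5 * (\<Sum>a<n. F a a a a) + 8 * (\<Sum>a<n. \<Sum>c<n. F a a c c) + 8 * (\<Sum>a<n. \<Sum>b<n. F a b a b) + 8 * (\<Sum>a<n. \<Sum>b<n. F a b b a)"
proof -
  have pt: "\<And>a b c e. F a b c e * Qf a b c e = (-5) * (F a b c e * (if a=b \<and> b=c \<and> c=e then 1 else 0))
     + 8 * (F a b c e * (if a=b \<and> c=e then 1 else 0)) + 8 * (F a b c e * (if a=c \<and> b=e then 1 else 0))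
     + 8 * (F a b c e * (if a=e \<and> b=c then 1 else 0))"
    unfolding Qf_def by (simp only: distrib_left)
  show ?thesis
    by (simp only: pt sum.distrib sum_distrib_left[symmetric] gD gA gB gC)
qed

lemma Qr: "(\<Sum>a<(n::nat). \<Sum>b<n. \<Sum>c<n. \<Sum>e<n. (r a * r b * r c * r e) * Qf a b c e)
   = -5 * (\<Sum>a<n. r a ^4) + 24 * (\<Sum>a<n. (r a)^2)^2"
  by (simp only: sumQ) (simp add: power2_eq_square power4_eq_xxxx sum_product algebra_simps)

lemma QQ: "(\<Sum>a<(n::nat). \<Sum>b<n. \<Sum>c<n. \<Sum>e<n. (Qf a b c e)^2) = 192 * n^2 + 169 * n"
proof -
  have "(\<Sum>a<(n::nat). \<Sum>b<n. \<Sum>c<n. \<Sum>e<n. (Qf a b c e)^2) = (\<Sum>a<(n::nat). \<Sum>b<n. \<Sum>c<n. \<Sum>e<n. Qf a b c e * Qf a b c e)"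
    by (simp add: power2_eq_square)
  also have "\<dots> = -5 * (\<Sum>a<n. Qf a a a a) + 8 * (\<Sum>a<n. \<Sum>c<n. Qf a a c c) + 8 * (\<Sum>a<n. \<Sum>b<n. Qf a b a b) + 8 * (\<Sum>a<n. \<Sum>b<n. Qf a b b a)"
    by (rule sumQ)
  also have "\<dots> = 192 * n^2 + 169 * n"
  proof -
    have e1: "\<And>a. Qf a a a a = 19" by (simp add: Qf_def)
    have e2: "\<And>a c. Qf a a c c = 8 + (if a = c then 11 else 0)" by (simp add: Qf_def)
    have e3: "\<And>a c. Qf a c a c = 8 + (if a = c then 11 else 0)" by (simp add: Qf_def)
    have e4: "\<And>a c. Qf a c c a = 8 + (if a = c then 11 else 0)" by (simp add: Qf_def)
    show ?thesis by (simp add: e1 e2 e3 e4 sum.distrib power2_eq_square algebra_simps)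
  qed
  finally show ?thesis .
qed
lemma CS_sum:
  fixes a b :: "'a \<Rightarrow> real"
  shows "(\<Sum>i\<in>I. a i * b i)\<^sup>2 \<le> (\<Sum>i\<in>I. (a i)\<^sup>2) * (\<Sum>i\<in>I. (b i)\<^sup>2)"
proof (cases "(\<Sum>i\<in>I. (b i)\<^sup>2) > 0")
  case False
  then consider "\<And>i. i\<in>I \<Longrightarrow> b i = 0" | "infinite I"
    by (metis (mono_tags, lifting) sum_pos2 zero_le_power2 zero_less_power2)
  thus ?thesis
    by fastforce
next
  case True
  define r where "r \<equiv> (\<Sum>i\<in>I. a i * b i) / (\<Sum>i\<in>I. (b i)\<^sup>2)"
  have "0 \<le> (\<Sum>i\<in>I. (a i - r * b i)\<^sup>2)"
    by (simp add: sum_nonneg)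
  also have "... = (\<Sum>i\<in>I. (a i)\<^sup>2) - 2 * r * (\<Sum>i\<in>I. a i * b i) + r\<^sup>2 * (\<Sum>i\<in>I. (b i)\<^sup>2)"
    by (simp add: algebra_simps power2_eq_square sum_distrib_left flip: sum.distrib)
  also have "\<dots> = (\<Sum>i\<in>I. (a i)\<^sup>2) - ((\<Sum>i\<in>I. a i * b i))\<^sup>2 / (\<Sum>i\<in>I. (b i)\<^sup>2)"
    by (simp add: r_def power2_eq_square)
  finally have "0 \<le> (\<Sum>i\<in>I. (a i)\<^sup>2) - ((\<Sum>i\<in>I. a i * b i))\<^sup>2 / (\<Sum>i\<in>I. (b i)\<^sup>2)" .
  hence "((\<Sum>i\<in>I. a i * b i))\<^sup>2 / (\<Sum>i\<in>I. (b i)\<^sup>2) \<le> (\<Sum>i\<in>I. (a i)\<^sup>2)"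
    by (simp add: le_diff_eq)
  thus "((\<Sum>i\<in>I. a i * b i))\<^sup>2 \<le> (\<Sum>i\<in>I. (a i)\<^sup>2) * (\<Sum>i\<in>I. (b i)\<^sup>2)"
    by (simp add: pos_divide_le_eq True)
qed

lemma pow4_sum: "(\<Sum>a\<in>A. f a)^4 = (\<Sum>a\<in>A. \<Sum>b\<in>A. \<Sum>c\<in>A. \<Sum>e\<in>A. f a * f b * f c * (f e::real))"
proof -
  define S where "S = (\<Sum>a\<in>A. f a)"
  have 1: "\<And>a b c. (\<Sum>e\<in>A. f a * f b * f c * f e) = f a * f b * f c * S"
    by (simp add: S_def sum_distrib_left)
  have 2: "\<And>a b. (\<Sum>c\<in>A. f a * f b * f c * S) = f a * f b * S * S"
  proof -
    fix a b have "(\<Sum>c\<in>A. f a * f b * f c * S) = (\<Sum>c\<in>A. f c) * (f a * f b * S)"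
      by (subst sum_distrib_right) (rule sum.cong, auto simp: algebra_simps)
    then show "(\<Sum>c\<in>A. f a * f b * f c * S) = f a * f b * S * S" by (simp add: S_def[symmetric] algebra_simps)
  qed
  have 3: "\<And>a. (\<Sum>b\<in>A. f a * f b * S * S) = f a * S * S * S"
  proof -
    fix a have "(\<Sum>b\<in>A. f a * f b * S * S) = (\<Sum>b\<in>A. f b) * (f a * S * S)"
      by (subst sum_distrib_right) (rule sum.cong, auto simp: algebra_simps)
    then show "(\<Sum>b\<in>A. f a * f b * S * S) = f a * S * S * S" by (simp add: S_def[symmetric] algebra_simps)
  qed
  have 4: "(\<Sum>a\<in>A. f a * S * S * S) = S * S * S * S"
  proof -
    have "(\<Sum>a\<in>A. f a * S * S * S) = (\<Sum>a\<in>A. f a) * (S * S * S)"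
      by (subst sum_distrib_right) (rule sum.cong, auto simp: algebra_simps)
    then show ?thesis by (simp add: S_def[symmetric] algebra_simps)
  qed
  have "(\<Sum>a\<in>A. \<Sum>b\<in>A. \<Sum>c\<in>A. \<Sum>e\<in>A. f a * f b * f c * f e) = S * S * S * S" by (simp only: 1 2 3 4)
  then show ?thesis by (simp add: S_def power4_eq_xxxx)
qed
lemma nest4: "(\<Sum>a\<in>A. \<Sum>b\<in>A. \<Sum>c\<in>A. \<Sum>e\<in>A. f a b c e) = (\<Sum>(a,b,c,e)\<in>A\<times>A\<times>A\<times>A. (f a b c e :: real))"
proof -
  have 1: "\<And>a b. (\<Sum>c\<in>A. \<Sum>e\<in>A. f a b c e) = (\<Sum>(c,e)\<in>A\<times>A. f a b c e)" by (rule sum.cartesian_product)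
  have 2: "\<And>a. (\<Sum>b\<in>A. \<Sum>(c,e)\<in>A\<times>A. f a b c e) = (\<Sum>(b,c,e)\<in>A\<times>A\<times>A. f a b c e)" by (rule sum.cartesian_product)
  have 3: "(\<Sum>a\<in>A. \<Sum>(b,c,e)\<in>A\<times>A\<times>A. f a b c e) = (\<Sum>(a,b,c,e)\<in>A\<times>A\<times>A\<times>A. f a b c e)" by (rule sum.cartesian_product)
  show ?thesis by (simp only: 1 2 3)
qed

lemma key:
  fixes I :: "'x set" and r :: "'x \<Rightarrow> nat \<Rightarrow> real"
  assumes fin: "finite I"
  shows "(\<Sum>x\<in>I. (-5 * (\<Sum>a<n. r x a ^4) + 24 * (\<Sum>a<n. (r x a)^2)^2))^2
     \<le> (\<Sum>x\<in>I. \<Sum>y\<in>I. (\<Sum>a<n. r x a * r y a)^4) * (192 * (real n)^2 + 169 * real n)"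
proof -
  define P where "P = {..<n}\<times>{..<n}\<times>{..<n}\<times>{..<n}"
  define m where "m x p = (case p of (a,b,c,e) \<Rightarrow> r x a * r x b * r x c * r x e)" for x p
  define q where "q p = (case p of (a,b,c,e) \<Rightarrow> Qf a b c e)" for p
  define T where "T p = (\<Sum>x\<in>I. m x p)" for p
  have finP: "finite P" by (simp add: P_def)
  have d4: "(\<Sum>a<n. r x a * r y a)^4 = (\<Sum>p\<in>P. m x p * m y p)" for x y
  proof -
    have "(\<Sum>a<n. r x a * r y a)^4 = (\<Sum>a<n. \<Sum>b<n. \<Sum>c<n. \<Sum>e<n. (r x a * r x b * r x c * r x e) * (r y a * r y b * r y c * r y e))"
      by (subst pow4_sum) (simp add: algebra_simps)
    also have "\<dots> = (\<Sum>p\<in>P. m x p * m y p)"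
      unfolding nest4 P_def m_def by (simp add: split_def)
    finally show ?thesis .
  qed
  have lhs: "(\<Sum>x\<in>I. (-5 * (\<Sum>a<n. r x a ^4) + 24 * (\<Sum>a<n. (r x a)^2)^2)) = (\<Sum>p\<in>P. T p * q p)"
  proof -
    have "\<And>x. (-5 * (\<Sum>a<n. r x a ^4) + 24 * (\<Sum>a<n. (r x a)^2)^2) = (\<Sum>p\<in>P. m x p * q p)"
    proof -
      fix x
      show "(-5 * (\<Sum>a<n. r x a ^4) + 24 * (\<Sum>a<n. (r x a)^2)^2) = (\<Sum>p\<in>P. m x p * q p)"
        unfolding Qr[where n=n and r="r x", symmetric] nest4 P_def m_def q_def by (simp add: split_def)
    qed
    then have "(\<Sum>x\<in>I. (-5 * (\<Sum>a<n. r x a ^4) + 24 * (\<Sum>a<n. (r x a)^2)^2)) = (\<Sum>x\<in>I. \<Sum>p\<in>P. m x p * q p)"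
      by simp
    also have "\<dots> = (\<Sum>p\<in>P. \<Sum>x\<in>I. m x p * q p)" by (rule sum.swap)
    also have "\<dots> = (\<Sum>p\<in>P. T p * q p)" by (simp add: T_def sum_distrib_right)
    finally show ?thesis .
  qed
  have rhs: "(\<Sum>x\<in>I. \<Sum>y\<in>I. (\<Sum>a<n. r x a * r y a)^4) = (\<Sum>p\<in>P. (T p)^2)"
  proof -
    have "(\<Sum>x\<in>I. \<Sum>y\<in>I. (\<Sum>a<n. r x a * r y a)^4) = (\<Sum>x\<in>I. \<Sum>y\<in>I. \<Sum>p\<in>P. m x p * m y p)"
      by (simp add: d4)
    also have "\<dots> = (\<Sum>x\<in>I. \<Sum>p\<in>P. \<Sum>y\<in>I. m x p * m y p)"
      by (simp add: sum.swap[of _ I P])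
    also have "\<dots> = (\<Sum>p\<in>P. \<Sum>x\<in>I. \<Sum>y\<in>I. m x p * m y p)"
      by (rule sum.swap)
    also have "\<dots> = (\<Sum>p\<in>P. (T p)^2)"
      by (simp add: T_def power2_eq_square sum_product)
    finally show ?thesis .
  qed
  have qq: "(\<Sum>p\<in>P. (q p)^2) = 192 * (real n)^2 + 169 * real n"
    using QQ[of n] unfolding nest4 P_def q_def by (simp add: split_def)
  show ?thesis
    unfolding lhs rhs qq[symmetric] by (rule CS_sum)
qed



lemma sqrt9: "sqrt (real (9::nat)) = 3"
  by (simp add: real_sqrt_unique)

lemma BtB:
  fixes B :: "real mat"
  assumes B: "B \<in> carrier_mat n n" and BB: "B * transpose_mat B = 9 \<cdot>\<^sub>m 1\<^sub>m n"
  shows "transpose_mat B * B = 9 \<cdot>\<^sub>m 1\<^sub>m n"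
proof -
  have Bt: "transpose_mat B \<in> carrier_mat n n" using B by simp
  have c9: "(1/9) \<cdot>\<^sub>m (9 \<cdot>\<^sub>m 1\<^sub>m n) = (1\<^sub>m n :: real mat)" by (rule eq_matI) auto
  have inv1: "B * ((1/9) \<cdot>\<^sub>m transpose_mat B) = 1\<^sub>m n"
    using B Bt BB c9 by (simp add: mult_smult_distrib[OF B Bt])
  have "((1/9) \<cdot>\<^sub>m transpose_mat B) * B = 1\<^sub>m n"
    by (rule mat_mult_left_right_inverse[OF B _ inv1]) (use Bt in simp)
  then have "(1/9) \<cdot>\<^sub>m (transpose_mat B * B) = 1\<^sub>m n"
    by (simp add: mult_smult_assoc_mat[OF Bt B])
  then have "9 \<cdot>\<^sub>m ((1/9) \<cdot>\<^sub>m (transpose_mat B * B)) = 9 \<cdot>\<^sub>m 1\<^sub>m n" by simp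
  moreover have "9 \<cdot>\<^sub>m ((1/9) \<cdot>\<^sub>m (transpose_mat B * B)) = transpose_mat B * B"
    by (rule eq_matI) auto
  ultimately show ?thesis by simp
qed

lemma unb_from_entries:
  assumes A: "weighing_matrix n 9 A" and B: "weighing_matrix n 9 B"
    and E: "\<And>i j. i < n \<Longrightarrow> j < n \<Longrightarrow> (A * transpose_mat B) $$ (i,j) \<in> {0,3,-3}"
  shows "unbiased_wm n 9 A B"
proof -
  have Ac: "A \<in> carrier_mat n n" and AA: "A * transpose_mat A = 9 \<cdot>\<^sub>m 1\<^sub>m n"
    using A by (auto simp: weighing_matrix_def)
  have Bc: "B \<in> carrier_mat n n" and BB: "B * transpose_mat B = 9 \<cdot>\<^sub>m 1\<^sub>m n"
    using B by (auto simp: weighing_matrix_def)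
  have Bt: "transpose_mat B \<in> carrier_mat n n" using Bc by simp
  have At: "transpose_mat A \<in> carrier_mat n n" using Ac by simp
  define P where "P = A * transpose_mat B"
  have Pc: "P \<in> carrier_mat n n" using Ac Bc by (simp add: P_def)
  define M where "M = (1 / sqrt (real 9)) \<cdot>\<^sub>m P"
  have M3: "M = (1/3) \<cdot>\<^sub>m P" by (simp add: M_def sqrt9)
  have Mc: "M \<in> carrier_mat n n" using Pc by (simp add: M3)
  have Pt: "transpose_mat P = B * transpose_mat A"
    unfolding P_def using transpose_mult[OF Ac Bt] by simp
  have MMt: "transpose_mat M = (1/3) \<cdot>\<^sub>m (B * transpose_mat A)"
    unfolding M3 Pt[symmetric] by (rule eq_matI) auto
  have "P * (B * transpose_mat A) = A * ((transpose_mat B * B) * transpose_mat A)"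
    using Ac Bc Bt At by (simp add: P_def assoc_mult_mat[of _ n n _ n _ n])
  also have "\<dots> = A * ((9 \<cdot>\<^sub>m 1\<^sub>m n) * transpose_mat A)" by (simp add: BtB[OF Bc BB])
  also have "\<dots> = 9 \<cdot>\<^sub>m (A * transpose_mat A)"
    using Ac At by (simp add: mult_smult_assoc_mat[of _ n n] mult_smult_distrib[of _ n n])
  also have "\<dots> = 81 \<cdot>\<^sub>m 1\<^sub>m n" unfolding AA by (rule eq_matI) auto
  finally have PP: "P * (B * transpose_mat A) = 81 \<cdot>\<^sub>m 1\<^sub>m n" .
  have "M * transpose_mat M = ((1/3) \<cdot>\<^sub>m P) * ((1/3) \<cdot>\<^sub>m (B * transpose_mat A))"
    by (subst MMt) (simp only: M3)
  also have "\<dots> = (1/3) \<cdot>\<^sub>m ((1/3) \<cdot>\<^sub>m (P * (B * transpose_mat A)))"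
  proof -
    have BAt: "B * transpose_mat A \<in> carrier_mat n n" using Bc At by simp
    have s3: "(1/3) \<cdot>\<^sub>m (B * transpose_mat A) \<in> carrier_mat n n" using BAt by simp
    show ?thesis
      by (simp only: mult_smult_assoc_mat[OF Pc s3] mult_smult_distrib[OF Pc BAt])
  qed
  also have "\<dots> = 9 \<cdot>\<^sub>m 1\<^sub>m n" unfolding PP by (rule eq_matI) auto
  finally have MM: "M * transpose_mat M = of_nat 9 \<cdot>\<^sub>m 1\<^sub>m n" by simp
  have ent: "\<forall>i<n. \<forall>j<n. M $$ (i,j) \<in> {1,-1,0}"
  proof (intro allI impI)
    fix i j assume ij: "i < n" "j < n"
    have "M $$ (i,j) = (1/3) * P $$ (i,j)" using Pc ij by (simp add: M3)
    then show "M $$ (i,j) \<in> {1,-1,0}" using E[OF ij] by (auto simp: P_def)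
  qed
  have "weighing_matrix n 9 M" using Mc ent MM by (simp add: weighing_matrix_def)
  then show ?thesis using A B by (simp add: unbiased_wm_def M_def P_def)
qed
definition L1 :: "int list list" where
  "L1 = [
    [0, 1, 1, 1, 1, 1, 1, 1, 1, 1, 0, 0, 0, 0, 0, 0, 0, 0, 0, 0],
    [1, 0, 1, 1, 1, - 1, - 1, 1, - 1, - 1, 0, 0, 0, 0, 0, 0, 0, 0, 0, 0],
    [1, 1, 0, 1, - 1, 1, - 1, - 1, 1, - 1, 0, 0, 0, 0, 0, 0, 0, 0, 0, 0],
    [1, 1, 1, 0, - 1, - 1, 1, - 1, - 1, 1, 0, 0, 0, 0, 0, 0, 0, 0, 0, 0],
    [1, 1, - 1, - 1, 0, 1, 1, 1, - 1, - 1, 0, 0, 0, 0, 0, 0, 0, 0, 0, 0],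
    [1, - 1, 1, - 1, 1, 0, 1, - 1, 1, - 1, 0, 0, 0, 0, 0, 0, 0, 0, 0, 0],
    [1, - 1, - 1, 1, 1, 1, 0, - 1, - 1, 1, 0, 0, 0, 0, 0, 0, 0, 0, 0, 0],
    [1, 1, - 1, - 1, 1, - 1, - 1, 0, 1, 1, 0, 0, 0, 0, 0, 0, 0, 0, 0, 0],
    [1, - 1, 1, - 1, - 1, 1, - 1, 1, 0, 1, 0, 0, 0, 0, 0, 0, 0, 0, 0, 0],
    [1, - 1, - 1, 1, - 1, - 1, 1, 1, 1, 0, 0, 0, 0, 0, 0, 0, 0, 0, 0, 0],
    [0, 0, 0, 0, 0, 0, 0, 0, 0, 0, 0, 1, 1, 1, 1, 1, 1, 1, 1, 1],
    [0, 0, 0, 0, 0, 0, 0, 0, 0, 0, 1, 0, 1, 1, 1, - 1, - 1, 1, - 1, - 1],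
    [0, 0, 0, 0, 0, 0, 0, 0, 0, 0, 1, 1, 0, 1, - 1, 1, - 1, - 1, 1, - 1],
    [0, 0, 0, 0, 0, 0, 0, 0, 0, 0, 1, 1, 1, 0, - 1, - 1, 1, - 1, - 1, 1],
    [0, 0, 0, 0, 0, 0, 0, 0, 0, 0, 1, 1, - 1, - 1, 0, 1, 1, 1, - 1, - 1],
    [0, 0, 0, 0, 0, 0, 0, 0, 0, 0, 1, - 1, 1, - 1, 1, 0, 1, - 1, 1, - 1],
    [0, 0, 0, 0, 0, 0, 0, 0, 0, 0, 1, - 1, - 1, 1, 1, 1, 0, - 1, - 1, 1],
    [0, 0, 0, 0, 0, 0, 0, 0, 0, 0, 1, 1, - 1, - 1, 1, - 1, - 1, 0, 1, 1],
    [0, 0, 0, 0, 0, 0, 0, 0, 0, 0, 1, - 1, 1, - 1, - 1, 1, - 1, 1, 0, 1],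
    [0, 0, 0, 0, 0, 0, 0, 0, 0, 0, 1, - 1, - 1, 1, - 1, - 1, 1, 1, 1, 0]]"

definition L2 :: "int list list" where
  "L2 = [
    [0, 0, 0, 0, 0, 1, - 1, 0, - 1, 1, 0, 0, 0, 1, 0, 1, 0, - 1, 1, 1],
    [0, 0, 0, 1, 0, 0, 1, - 1, - 1, 0, 0, 0, 0, - 1, 0, 1, 1, 1, 0, 1],
    [0, 0, 0, 1, - 1, - 1, 0, 0, 0, 1, 1, 0, 0, 1, - 1, 0, - 1, 1, 0, 0],
    [0, 1, 0, - 1, 0, 0, 0, - 1, 0, 1, 0, - 1, - 1, 0, 0, 1, 0, 0, - 1, - 1],
    [0, 1, 1, 0, 0, 0, - 1, 0, 0, - 1, - 1, 0, - 1, 0, - 1, 0, 0, 1, 1, 0],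
    [0, 1, - 1, 0, - 1, 1, 0, 0, 0, 0, - 1, 1, 1, 0, - 1, 0, 0, 0, - 1, 0],
    [1, 0, 0, - 1, - 1, 0, 0, 0, - 1, 0, 1, 1, - 1, 0, 0, - 1, 1, 0, 0, 0],
    [1, 0, 1, 0, 0, 1, 0, 0, 1, 0, 0, 0, 0, 1, 1, 0, 0, 1, - 1, 1],
    [1, 0, - 1, 0, 0, 0, - 1, - 1, 0, 0, 0, - 1, 0, - 1, 0, - 1, - 1, 0, 0, 1],
    [1, 1, 0, 0, 1, 0, 0, 1, 0, 0, 1, - 1, 1, 0, - 1, 0, 1, 0, 0, 0],
    [0, 0, 0, 1, 0, 1, 0, - 1, 1, 1, 0, 0, 0, 0, 0, - 1, 1, 0, 1, - 1],
    [0, 0, 0, - 1, 0, 1, 1, 1, 0, 1, 0, 0, 0, - 1, 0, 0, - 1, 1, 1, 0],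
    [1, 0, 0, 1, - 1, 0, - 1, 1, 0, 0, 0, 0, 0, - 1, 1, 1, 0, 0, 0, - 1],
    [0, - 1, - 1, 0, 0, 1, 0, 0, - 1, - 1, 0, - 1, 0, 1, 0, 0, 0, 1, 0, - 1],
    [- 1, 0, - 1, 0, - 1, 0, 0, 1, 1, 0, 0, - 1, - 1, 0, 0, 0, 1, 0, 0, 1],
    [- 1, 1, 1, 0, - 1, 0, 0, 0, - 1, 0, 0, - 1, 1, 0, 1, - 1, 0, 0, 0, 0],
    [1, 1, - 1, 0, 0, - 1, 1, 0, 0, 0, - 1, 0, 0, 1, 1, 0, 0, 0, 1, 0],
    [0, 0, 0, 1, 1, 0, 0, 1, - 1, 1, - 1, 0, - 1, 0, 0, - 1, 0, 0, - 1, 0],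
    [0, - 1, 0, - 1, 0, - 1, - 1, 0, 0, 1, - 1, 0, 1, 0, 0, 0, 1, 1, 0, 0],
    [1, - 1, 1, 0, - 1, 0, 1, 0, 0, 0, - 1, - 1, 0, 0, - 1, 0, 0, - 1, 0, 0]]"

definition L3 :: "int list list" where
  "L3 = [
    [0, 0, 0, 0, 0, 1, - 1, 0, - 1, 1, 0, 0, 0, 1, 1, - 1, 1, 1, 0, 0],
    [0, 0, 0, 1, 0, 0, 1, - 1, - 1, 0, 0, 0, 0, - 1, 1, - 1, - 1, 0, - 1, 0],
    [0, 0, 0, 1, - 1, - 1, 0, 0, 0, 1, 0, 0, - 1, 0, 1, 1, 0, 0, 1, 1],
    [0, 1, 0, - 1, - 1, 0, 1, 0, 0, 0, 1, - 1, 0, - 1, 0, 0, 1, 1, 0, 0],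
    [0, 1, 1, 0, 0, 0, - 1, 0, 0, - 1, 0, - 1, - 1, 0, 1, 0, 0, - 1, 0, - 1],
    [0, 1, - 1, 0, 0, 0, 0, - 1, 1, 0, 1, 0, 0, 1, 0, - 1, - 1, 0, 1, 0],
    [1, 0, 0, - 1, 0, - 1, 0, - 1, 0, 0, 0, 1, 1, 0, 1, 0, 1, - 1, 0, 0],
    [1, 0, 1, 0, 0, 1, 0, 0, 1, 0, - 1, 0, 0, - 1, 0, - 1, 0, 0, 1, 1],
    [1, 0, - 1, 0, - 1, 0, 0, 0, 0, - 1, - 1, 1, - 1, 0, 0, 0, 0, 1, 0, - 1],
    [1, 1, 0, 0, 1, 0, 0, 1, 0, 0, 1, 1, - 1, 0, 0, 0, 0, 0, - 1, 1],
    [0, 0, 0, 1, 1, - 1, 1, 1, 0, 0, 0, 0, 0, 0, 0, - 1, 1, 0, 1, - 1],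
    [0, 0, 0, - 1, 1, - 1, - 1, 0, - 1, 0, 0, 0, 0, - 1, 0, 0, - 1, 1, 1, 0],
    [0, 0, - 1, 0, 1, 1, 0, 0, 1, 1, 0, 0, 0, - 1, 1, 1, 0, 0, 0, - 1],
    [1, - 1, 0, - 1, 0, 0, 1, 1, 0, 0, 0, - 1, 0, 1, 1, 0, - 1, 0, 0, 0],
    [0, - 1, - 1, 0, 1, 0, 0, - 1, 0, - 1, 0, - 1, - 1, 0, 0, 0, 1, 0, 0, 1],
    [1, 0, 0, 1, 0, - 1, - 1, 0, 1, 0, 0, - 1, 1, 0, 0, 0, 0, 1, - 1, 0],
    [0, 1, 1, 0, 1, 0, 1, - 1, 0, 0, - 1, 0, 0, 1, 0, 1, 0, 1, 0, 0],
    [- 1, 0, 0, - 1, 0, - 1, 0, 0, 1, 1, - 1, 0, - 1, 0, 0, - 1, 0, 0, - 1, 0],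
    [- 1, 1, - 1, 0, 0, 0, 0, 1, 0, - 1, - 1, 0, 1, 0, 1, 0, 0, 0, 0, 1],
    [1, 1, - 1, 0, 0, 0, 0, 0, - 1, 1, - 1, - 1, 0, 0, - 1, 0, 0, - 1, 0, 0]]"

definition L4 :: "int list list" where
  "L4 = [
    [0, 0, 0, 0, 0, 1, - 1, 0, - 1, 1, 0, 0, 0, 1, - 1, 0, - 1, 0, - 1, - 1],
    [0, 0, 0, 1, 0, 0, 1, - 1, - 1, 0, 0, 1, 0, 1, 0, 0, - 1, 0, 1, 1],
    [0, 0, 1, 0, 0, 1, 0, - 1, 0, - 1, 0, - 1, 1, - 1, 0, 0, - 1, - 1, 0, 0],
    [0, 1, 0, 0, 1, 0, 0, 0, - 1, - 1, 1, - 1, - 1, 0, 0, 1, 0, 1, 0, 0],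
    [0, 1, 0, - 1, 0, 0, 0, - 1, 0, 1, 1, 0, 0, 0, - 1, 0, 1, - 1, 1, 0],
    [0, 1, - 1, 0, - 1, 1, 0, 0, 0, 0, 1, 0, 0, 0, 1, - 1, 0, 0, - 1, 1],
    [1, 0, 0, 0, 1, 1, 1, 0, 0, 0, 0, 1, - 1, - 1, 0, - 1, 0, 0, 0, - 1],
    [1, 0, 0, - 1, - 1, 0, 0, 0, - 1, 0, 0, 1, 1, - 1, 0, 1, 0, 1, 0, 0],
    [1, 0, - 1, 0, 0, 0, - 1, - 1, 0, 0, - 1, 0, - 1, 0, 1, 1, 0, - 1, 0, 0],
    [1, 1, 1, 1, 0, 0, 0, 0, 0, 0, - 1, 0, 0, 0, - 1, 0, 1, 0, - 1, 1],
    [0, 0, 0, 1, - 1, 0, - 1, 0, - 1, - 1, 0, 0, 0, 0, 0, - 1, 1, 0, 1, - 1],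
    [0, 1, 0, 1, 0, 0, - 1, 0, 1, 1, 0, 0, 0, - 1, 0, 0, - 1, 1, 1, 0],
    [0, - 1, 1, - 1, 0, 0, - 1, - 1, 0, 0, 0, 0, - 1, 0, 0, - 1, 0, 1, 0, 1],
    [1, - 1, - 1, 0, 0, 1, 0, 1, 0, 0, 0, - 1, 0, 0, - 1, 0, 0, 0, 1, 1],
    [1, 0, 0, 0, - 1, 0, 1, - 1, 1, 0, 0, - 1, 0, 1, 0, 0, 0, 1, 0, - 1],
    [1, 0, 0, 0, 1, - 1, 0, 0, - 1, 1, 0, - 1, 1, 0, 1, - 1, 0, 0, 0, 0],
    [0, 1, - 1, - 1, 0, - 1, 0, 0, 0, - 1, - 1, 0, 0, 0, - 1, - 1, - 1, 0, 0, 0],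
    [0, 1, 1, - 1, 0, 1, 0, 1, 0, 0, - 1, 0, 0, 1, 1, 0, 0, 0, 1, 0],
    [- 1, 0, - 1, 0, 1, 1, 0, - 1, 0, 0, - 1, 0, 1, 0, 0, 0, 1, 1, 0, 0],
    [- 1, 0, 0, 0, - 1, 0, 1, 0, - 1, 1, - 1, - 1, - 1, - 1, 0, 0, 0, 0, 0, 0]]"

definition dotl :: "int list \<Rightarrow> int list \<Rightarrow> int" where "dotl r s = sum_list (map2 (*) r s)"
definition ubc :: "int list list \<Rightarrow> int list list \<Rightarrow> bool" where
  "ubc L M = list_all (\<lambda>r. list_all (\<lambda>s. dotl r s \<in> {0,3,-3}) M) L"
definition orthc :: "int list list \<Rightarrow> bool" where
  "orthc L = (map (\<lambda>r. map (dotl r) L) L = map (\<lambda>i. map (\<lambda>j. if i = j then 9 else 0) [0..<20]) [0..<20])"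
definition validl :: "int list list \<Rightarrow> bool" where
  "validl L = (length L = 20 \<and> list_all (\<lambda>r. length r = 20 \<and> list_all (\<lambda>x. x \<in> {1,-1,0}) r) L)"
definition mk :: "int list list \<Rightarrow> real mat" where
  "mk L = mat 20 20 (\<lambda>(i,j). real_of_int (L!i!j))"

lemma dotl_sum: "length xs = n \<Longrightarrow> length ys = n \<Longrightarrow> dotl xs ys = (\<Sum>k<n. xs!k * ys!k)"
  by (simp add: dotl_def sum_list_sum_nth atLeast0LessThan)

lemma prod_entry:
  assumes "A \<in> carrier_mat n n" "B \<in> carrier_mat n n" "i < n" "j < n"
  shows "(A * transpose_mat B) $$ (i,j) = (\<Sum>a<n. A $$ (i,a) * B $$ (j,a))"
  using assms by (simp add: scalar_prod_def atLeast0LessThan)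

lemma validlD:
  assumes "validl L"
  shows "length L = 20" "i < 20 \<Longrightarrow> length (L!i) = 20"
    "i < 20 \<Longrightarrow> j < 20 \<Longrightarrow> L!i!j \<in> {1,-1,0}"
  using assms by (auto simp: validl_def list_all_length)

lemma mk_carrier: "mk L \<in> carrier_mat 20 20" by (simp add: mk_def)

lemma mk_index: "i < 20 \<Longrightarrow> j < 20 \<Longrightarrow> mk L $$ (i,j) = real_of_int (L!i!j)"
  by (simp add: mk_def)

lemma mk_prod:
  assumes "validl L" "validl M" "i < 20" "j < 20"
  shows "(mk L * transpose_mat (mk M)) $$ (i,j) = real_of_int (dotl (L!i) (M!j))"
proof -
  have "(mk L * transpose_mat (mk M)) $$ (i,j) = (\<Sum>a<20. mk L $$ (i,a) * mk M $$ (j,a))"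
    using assms by (intro prod_entry mk_carrier)
  also have "\<dots> = (\<Sum>a<20. real_of_int (L!i!a * M!j!a))"
    using assms by (simp add: mk_index)
  also have "\<dots> = real_of_int (dotl (L!i) (M!j))"
    using assms validlD(2)[of L i] validlD(2)[of M j] by (simp add: dotl_sum)
  finally show ?thesis .
qed

lemma wm_mk:
  assumes v: "validl L" and o: "orthc L"
  shows "weighing_matrix 20 9 (mk L)"
  unfolding weighing_matrix_def
proof (intro conjI allI impI)
  show "mk L \<in> carrier_mat 20 20" by (rule mk_carrier)
  fix i j :: nat assume "i < 20" "j < 20"
  then show "mk L $$ (i,j) \<in> {1,-1,0}" using validlD(3)[OF v] by (force simp: mk_index)
next
  show "mk L * transpose_mat (mk L) = of_nat 9 \<cdot>\<^sub>m 1\<^sub>m 20"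
  proof (rule eq_matI)
    fix i j assume ij: "i < dim_row (of_nat 9 \<cdot>\<^sub>m 1\<^sub>m 20 :: real mat)" "j < dim_col (of_nat 9 \<cdot>\<^sub>m 1\<^sub>m 20 :: real mat)"
    then have ij': "i < 20" "j < 20" by auto
    have "map (\<lambda>r. map (dotl r) L) L ! i ! j = map (\<lambda>i. map (\<lambda>j. if i = j then 9 else 0) [0..<20]) [0..<20] ! i ! j"
      using o by (simp add: orthc_def)
    then have "dotl (L!i) (L!j) = (if i = j then 9 else 0)"
      using ij' validlD(1)[OF v] by simp
    then show "(mk L * transpose_mat (mk L)) $$ (i, j) = (of_nat 9 \<cdot>\<^sub>m 1\<^sub>m 20 :: real mat) $$ (i, j)"
      using ij' by (simp add: mk_prod[OF v v])
  qed (auto simp: mk_def)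
qed

lemma unb_mk:
  assumes "validl L" "orthc L" "validl M" "orthc M" "ubc L M"
  shows "unbiased_wm 20 9 (mk L) (mk M)"
proof (rule unb_from_entries)
  show "weighing_matrix 20 9 (mk L)" "weighing_matrix 20 9 (mk M)" using assms wm_mk by auto
  fix i j :: nat assume ij: "i < 20" "j < 20"
  have "dotl (L!i) (M!j) \<in> {0,3,-3}"
    using assms(5) ij validlD(1)[OF assms(1)] validlD(1)[OF assms(3)]
    by (auto simp: ubc_def list_all_length)
  then show "(mk L * transpose_mat (mk M)) $$ (i,j) \<in> {0,3,-3}"
    using ij by (auto simp: mk_prod[OF assms(1) assms(3)])
qed

lemma v1: "validl L1" by (simp add: validl_def L1_def)
lemma v2: "validl L2" by (simp add: validl_def L2_def)
lemma v3: "validl L3" by (simp add: validl_def L3_def)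
lemma v4: "validl L4" by (simp add: validl_def L4_def)
lemma o1: "orthc L1" by (simp add: orthc_def dotl_def L1_def upt_rec)
lemma o2: "orthc L2" by (simp add: orthc_def dotl_def L2_def upt_rec)
lemma o3: "orthc L3" by (simp add: orthc_def dotl_def L3_def upt_rec)
lemma o4: "orthc L4" by (simp add: orthc_def dotl_def L4_def upt_rec)
lemma u12: "ubc L1 L2" by (simp add: ubc_def dotl_def L1_def L2_def)
lemma u13: "ubc L1 L3" by (simp add: ubc_def dotl_def L1_def L3_def)
lemma u14: "ubc L1 L4" by (simp add: ubc_def dotl_def L1_def L4_def)
lemma u21: "ubc L2 L1" by (simp add: ubc_def dotl_def L1_def L2_def)
lemma u23: "ubc L2 L3" by (simp add: ubc_def dotl_def L2_def L3_def)
lemma u24: "ubc L2 L4" by (simp add: ubc_def dotl_def L2_def L4_def)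
lemma u31: "ubc L3 L1" by (simp add: ubc_def dotl_def L1_def L3_def)
lemma u32: "ubc L3 L2" by (simp add: ubc_def dotl_def L2_def L3_def)
lemma u34: "ubc L3 L4" by (simp add: ubc_def dotl_def L3_def L4_def)
lemma u41: "ubc L4 L1" by (simp add: ubc_def dotl_def L1_def L4_def)
lemma u42: "ubc L4 L2" by (simp add: ubc_def dotl_def L2_def L4_def)
lemma u43: "ubc L4 L3" by (simp add: ubc_def dotl_def L3_def L4_def)


lemma ub_card:
  assumes fin: "finite S" and mu: "mutually_unbiased_wm 20 9 S"
  shows "card S \<le> 34"
proof (cases "S = {}")
  case True then show ?thesis by simp
next
  case ne: False
  define m where "m = card S"
  have m1: "m \<ge> 1" using fin ne by (simp add: m_def Suc_le_eq card_gt_0_iff)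
  define I where "I = S \<times> {..<(20::nat)}"
  have finI: "finite I" using fin by (simp add: I_def)
  have cardI: "card I = m * 20" by (simp add: I_def m_def card_cartesian_product)
  define r where "r x a = fst x $$ (snd x, a)" for x :: "real mat \<times> nat" and a
  have wm: "\<And>W. W\<in>S \<Longrightarrow> weighing_matrix 20 9 W" using mu by (simp add: mutually_unbiased_wm_def)
  have unb: "\<And>W V. W\<in>S \<Longrightarrow> V\<in>S \<Longrightarrow> W \<noteq> V \<Longrightarrow> unbiased_wm 20 9 W V"
    using mu by (simp add: mutually_unbiased_wm_def)
  have p4: "\<And>x::real. x \<in> {1,-1,0} \<Longrightarrow> x^4 = x^2" by auto
  have rowsq: "(\<Sum>a<20. (M $$ (i,a))^2) = 9" if "weighing_matrix 20 9 M" "i < 20" for M i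
  proof -
    have Mc: "M \<in> carrier_mat 20 20" and MM: "M * transpose_mat M = of_nat 9 \<cdot>\<^sub>m 1\<^sub>m 20"
      using that by (auto simp: weighing_matrix_def)
    have "(\<Sum>a<20. (M $$ (i,a))^2) = (M * transpose_mat M) $$ (i,i)"
      using prod_entry[OF Mc Mc that(2) that(2)] by (simp add: power2_eq_square)
    also have "\<dots> = 9" using that(2) by (simp add: MM)
    finally show ?thesis .
  qed
  have row4: "(\<Sum>a<20. (M $$ (i,a))^4) = 9" if "weighing_matrix 20 9 M" "i < 20" for M i
  proof -
    have "(\<Sum>a<20. (M $$ (i,a))^4) = (\<Sum>a<20. (M $$ (i,a))^2)"
      using that by (intro sum.cong refl p4) (auto simp: weighing_matrix_def)
    then show ?thesis using rowsq[OF that] by simp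
  qed
  have qx: "-5 * (\<Sum>a<20. r x a ^4) + 24 * (\<Sum>a<20. (r x a)^2)^2 = 1899" if xI: "x \<in> I" for x
  proof -
    obtain W i where x: "x = (W,i)" "W \<in> S" "i < 20" using xI by (cases x) (auto simp: I_def)
    show ?thesis using row4[OF wm[OF x(2)] x(3)] rowsq[OF wm[OF x(2)] x(3)] by (simp add: r_def x)
  qed
  have dsum: "(\<Sum>y\<in>I. (\<Sum>a<20. r x a * r y a)^4) = 6561 + 729 * (real m - 1)" if xI: "x \<in> I" for x
  proof -
    obtain W i where x: "x = (W,i)" "W \<in> S" "i < 20" using xI by (cases x) (auto simp: I_def)
    have Wc: "W \<in> carrier_mat 20 20" using wm[OF x(2)] by (simp add: weighing_matrix_def)
    define f where "f V = (\<Sum>j<20. ((W * transpose_mat V) $$ (i,j))^4)" for V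
    have "(\<Sum>y\<in>I. (\<Sum>a<20. r x a * r y a)^4) = (\<Sum>V\<in>S. \<Sum>j<20. (\<Sum>a<20. W $$ (i,a) * V $$ (j,a))^4)"
      unfolding I_def by (simp add: r_def x sum.cartesian_product split_def)
    also have "\<dots> = (\<Sum>V\<in>S. f V)"
    proof (rule sum.cong[OF refl])
      fix V assume V: "V \<in> S"
      have Vc: "V \<in> carrier_mat 20 20" using wm[OF V] by (simp add: weighing_matrix_def)
      show "(\<Sum>j<20. (\<Sum>a<20. W $$ (i,a) * V $$ (j,a))^4) = f V"
        unfolding f_def using prod_entry[OF Wc Vc x(3)] by (intro sum.cong refl) simp
    qed
    also have "\<dots> = f W + (\<Sum>V\<in>S-{W}. f V)" using fin x(2) by (rule sum.remove)
    also have "f W = 6561"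
    proof -
      have "f W = (\<Sum>j<20. (if i = j then 9 else 0::real)^4)"
        unfolding f_def using wm[OF x(2)] x(3) by (intro sum.cong refl) (simp add: weighing_matrix_def)
      also have "\<dots> = 6561" using x(3) by (simp add: if_distrib[of "\<lambda>t. t^4"] cong: if_cong)
      finally show ?thesis .
    qed
    also have "(\<Sum>V\<in>S-{W}. f V) = (\<Sum>V\<in>S-{W}. 729)"
    proof (rule sum.cong[OF refl])
      fix V assume V: "V \<in> S - {W}"
      define M where "M = (1 / sqrt (real 9)) \<cdot>\<^sub>m (W * transpose_mat V)"
      have Mw: "weighing_matrix 20 9 M" using unb[OF x(2), of V] V by (auto simp: unbiased_wm_def M_def)
      have Vc: "V \<in> carrier_mat 20 20" using wm[of V] V by (simp add: weighing_matrix_def)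
      have Me: "(W * transpose_mat V) $$ (i,j) = 3 * M $$ (i,j)" if "j < 20" for j
        using Wc Vc x(3) that by (simp add: M_def sqrt9)
      have Ment: "M $$ (i,j) \<in> {1,-1,0}" if "j < 20" for j
        using Mw x(3) that by (simp add: weighing_matrix_def)
      have "f V = (\<Sum>j<20. 81 * (M $$ (i,j))^2)"
        unfolding f_def by (intro sum.cong refl) (simp add: Me power_mult_distrib p4[OF Ment])
      also have "\<dots> = 81 * 9" using rowsq[OF Mw x(3)] by (simp add: sum_distrib_left[symmetric])
      finally show "f V = 729" by simp
    qed
    also have "(\<Sum>V\<in>S-{W}. (729::real)) = 729 * (real m - 1)"
      using fin x(2) m1 by (simp add: m_def of_nat_diff)
    finally show ?thesis .
  qed
  have K: "(\<Sum>x\<in>I. (-5 * (\<Sum>a<20. r x a ^4) + 24 * (\<Sum>a<20. (r x a)^2)^2))^2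
     \<le> (\<Sum>x\<in>I. \<Sum>y\<in>I. (\<Sum>a<20. r x a * r y a)^4) * (192 * (real 20)^2 + 169 * real 20)"
    by (rule key[OF finI])
  have L: "(\<Sum>x\<in>I. (-5 * (\<Sum>a<20. r x a ^4) + 24 * (\<Sum>a<20. (r x a)^2)^2)) = 1899 * (real m * 20)"
    using qx cardI by simp
  have R: "(\<Sum>x\<in>I. \<Sum>y\<in>I. (\<Sum>a<20. r x a * r y a)^4) = real m * 20 * (6561 + 729 * (real m - 1))"
    using dsum cardI by simp
  define t where "t = real m"
  have t0: "t > 0" using m1 by (simp add: t_def)
  have ineq: "(1899 * (t * 20))^2 \<le> t * 20 * (6561 + 729 * (t - 1)) * 80180"
    using K unfolding L R t_def by simp
  have "t * (273456000 * t - 9352195200) \<le> 0"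
    using ineq by (simp add: power2_eq_square algebra_simps)
  then have "273456000 * t - 9352195200 \<le> 0"
    using t0 by (simp add: mult_le_0_iff)
  then have "t < 35" by simp
  then show ?thesis by (simp add: t_def m_def)
qed

definition S4 :: "real mat set" where "S4 = {mk L1, mk L2, mk L3, mk L4}"

lemma e01: "mk L1 $$ (0,1) = 1" "mk L2 $$ (0,1) = 0" "mk L3 $$ (0,1) = 0" "mk L4 $$ (0,1) = 0"
  by (simp_all add: mk_index L1_def L2_def L3_def L4_def)
lemma e014: "mk L2 $$ (0,14) = 0" "mk L3 $$ (0,14) = 1" "mk L4 $$ (0,14) = -1"
  by (simp_all add: mk_index L2_def L3_def L4_def)

lemma dist4: "mk L1 \<noteq> mk L2" "mk L1 \<noteq> mk L3" "mk L1 \<noteq> mk L4"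
  "mk L2 \<noteq> mk L3" "mk L2 \<noteq> mk L4" "mk L3 \<noteq> mk L4"
  using e01 e014 by (metis zero_neq_one, metis zero_neq_one, metis zero_neq_one,
     metis zero_neq_one, metis zero_neq_neg_one, metis one_neq_neg_one)

lemma card_S4: "card S4 = 4"
  using dist4 by (simp add: S4_def)

lemma mu_S4: "mutually_unbiased_wm 20 9 S4"
proof -
  have w: "weighing_matrix 20 9 (mk L1)" "weighing_matrix 20 9 (mk L2)"
    "weighing_matrix 20 9 (mk L3)" "weighing_matrix 20 9 (mk L4)"
    using wm_mk v1 v2 v3 v4 o1 o2 o3 o4 by auto
  note U = unb_mk[OF v1 o1 v2 o2 u12] unb_mk[OF v1 o1 v3 o3 u13] unb_mk[OF v1 o1 v4 o4 u14]
    unb_mk[OF v2 o2 v1 o1 u21] unb_mk[OF v2 o2 v3 o3 u23] unb_mk[OF v2 o2 v4 o4 u24]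
    unb_mk[OF v3 o3 v1 o1 u31] unb_mk[OF v3 o3 v2 o2 u32] unb_mk[OF v3 o3 v4 o4 u34]
    unb_mk[OF v4 o4 v1 o1 u41] unb_mk[OF v4 o4 v2 o2 u42] unb_mk[OF v4 o4 v3 o3 u43]
  show ?thesis unfolding mutually_unbiased_wm_def S4_def using w U by auto
qed

theorem proposition6p9:
  shows "W_max 20 9 \<in> {4..34}"
proof -
  define X where "X = {card S | S. finite S \<and> mutually_unbiased_wm 20 9 S}"
  have Xsub: "X \<subseteq> {..34}" using ub_card by (auto simp: X_def)
  have finX: "finite X" using Xsub finite_subset by blast
  have fS4: "finite S4" by (simp add: S4_def)
  have X4: "4 \<in> X" unfolding X_def using fS4 mu_S4 card_S4 by force
  have W: "W_max 20 9 = Max X" by (simp add: W_max_def X_def)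
  have "4 \<le> Max X" using finX X4 by (rule Max_ge)
  moreover have "Max X \<in> X" using finX X4 by (intro Max_in) auto
  then have "Max X \<le> 34" using Xsub by auto
  ultimately show ?thesis using W by simp
qed

end
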